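(* Under Assumptions (M), (P) and (L), there exists a deterministic constant $L_h'$ such that $\|h(w_1)-h(w_2)\|\le L_h'\|w_1-w_2\|$ for all $w_1,w_2\in\mathbb R^d$.
   Context: Let $\langle\cdot,\cdot\rangle$ be an inner product on $\mathbb R^d$ with induced norm $\|\cdot\|$. Let $\mathcal Y$ be a finite set and $H:\mathbb R^d\times\mathcal Y\to\mathbb R^d$. (M) There is a family $\{P_w:w\in\mathbb R^d\}$ of $|\mathcal Y|\times|\mathcal Y|$ stochastic matrices such that for every $P$ in the closure of this family, the time-homogeneous Markov chain with transition matrix $P$ is irreducible and aperiodic. Then each $P_w$ has a unique stationary distribution $d_{\mathcal Y,w}$; define $h(w)\doteq\sum_{y\in\mathcal Y}d_{\mathcal Y,w}(y)H(w,y)$. (P) There is a constant $C_P$ such that $\|P_{w_1}-P_{w_2}\|\le\frac{C_P}{1+\|w_1\|+\|w_2\|}\|w_1-w_2\|$ for all $w_1,w_2$ (for a fixed matrix norm). (L) There is a constant $L_h$ with $\|H(w_1,y)-H(w_2,y)\|\le L_h\|w_1-w_2\|$ and $\|H(0,y)\|\le L_h$ for all $w_1,w_2,y$. *)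

theory Defs
  imports "HOL-Analysis.Analysis"
begin

text \<open>Transition matrices on a finite state type 'y are functions 'y => 'y => real;
  entry (i,j) is the probability of moving from i to j.\<close>

definition stochastic :: "('y::finite \<Rightarrow> 'y \<Rightarrow> real) \<Rightarrow> bool" where
  "stochastic P \<longleftrightarrow> (\<forall>i j. 0 \<le> P i j) \<and> (\<forall>i. (\<Sum>j\<in>UNIV. P i j) = 1)"

fun mpow :: "('y::finite \<Rightarrow> 'y \<Rightarrow> real) \<Rightarrow> nat \<Rightarrow> 'y \<Rightarrow> 'y \<Rightarrow> real" where
  "mpow P 0 = (\<lambda>i j. if i = j then 1 else 0)"
| "mpow P (Suc n) = (\<lambda>i j. \<Sum>k\<in>UNIV. mpow P n i k * P k j)"

definition irreducible_chain :: "('y::finite \<Rightarrow> 'y \<Rightarrow> real) \<Rightarrow> bool" where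
  "irreducible_chain P \<longleftrightarrow> (\<forall>i j. \<exists>n. 0 < mpow P n i j)"

definition period :: "('y::finite \<Rightarrow> 'y \<Rightarrow> real) \<Rightarrow> 'y \<Rightarrow> nat" where
  "period P i = Gcd {n. 0 < n \<and> 0 < mpow P n i i}"

definition aperiodic_chain :: "('y::finite \<Rightarrow> 'y \<Rightarrow> real) \<Rightarrow> bool" where
  "aperiodic_chain P \<longleftrightarrow> (\<forall>i. period P i = 1)"

definition stationary_dist :: "('y::finite \<Rightarrow> real) \<Rightarrow> ('y \<Rightarrow> 'y \<Rightarrow> real) \<Rightarrow> bool" where
  "stationary_dist d P \<longleftrightarrow> (\<forall>y. 0 \<le> d y) \<and> (\<Sum>y\<in>UNIV. d y) = 1
      \<and> (\<forall>j. (\<Sum>i\<in>UNIV. d i * P i j) = d j)"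

text \<open>The (unique, under (M)) stationary distribution.\<close>
definition stat_dist :: "('y::finite \<Rightarrow> 'y \<Rightarrow> real) \<Rightarrow> 'y \<Rightarrow> real" where
  "stat_dist P = (THE d. stationary_dist d P)"

definition mat_norm :: "('y::finite \<Rightarrow> 'y \<Rightarrow> real) \<Rightarrow> real" where
  "mat_norm A = (\<Sum>i\<in>UNIV. \<Sum>j\<in>UNIV. \<bar>A i j\<bar>)"

definition hbar :: "('a \<Rightarrow> 'y::finite \<Rightarrow> 'y \<Rightarrow> real) \<Rightarrow> ('a \<Rightarrow> 'y \<Rightarrow> 'v::real_vector) \<Rightarrow> 'a \<Rightarrow> 'v" where
  "hbar P H w = (\<Sum>y\<in>UNIV. stat_dist (P w) y *\<^sub>R H w y)"

end

theory Submission
  imports Defs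
begin


lemma mpow_nonneg:
  assumes "stochastic Q" shows "0 \<le> mpow Q n i j"
  using assms by (induction n arbitrary: j) (auto simp: stochastic_def intro!: sum_nonneg)

lemma inv_pow:
  fixes y :: "'y::finite \<Rightarrow> real"
  assumes "\<forall>j. (\<Sum>i\<in>UNIV. y i * Q i j) = y j"
  shows "(\<Sum>i\<in>UNIV. y i * mpow Q n i j) = y j"
proof (induction n arbitrary: j)
  case 0
  then show ?case by (simp add: if_distrib cong: if_cong)
next
  case (Suc n)
  have "(\<Sum>i\<in>UNIV. y i * mpow Q (Suc n) i j) = (\<Sum>i\<in>UNIV. \<Sum>k\<in>UNIV. y i * mpow Q n i k * Q k j)"
    by (simp add: sum_distrib_left mult.assoc)
  also have "\<dots> = (\<Sum>k\<in>UNIV. (\<Sum>i\<in>UNIV. y i * mpow Q n i k) * Q k j)"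
    by (subst sum.swap) (simp add: sum_distrib_right)
  also have "\<dots> = (\<Sum>k\<in>UNIV. y k * Q k j)" using Suc by simp
  also have "\<dots> = y j" using assms by simp
  finally show ?case .
qed

lemma pos_spread:
  fixes y :: "'y::finite \<Rightarrow> real"
  assumes st: "stochastic Q" and irr: "irreducible_chain Q"
    and inv: "\<forall>j. (\<Sum>i\<in>UNIV. y i * Q i j) = y j" and nn: "\<forall>i. 0 \<le> y i"
    and pos: "0 < y i"
  shows "0 < y j"
proof -
  obtain n where n: "0 < mpow Q n i j" using irr unfolding irreducible_chain_def by blast
  have "y i * mpow Q n i j \<le> (\<Sum>k\<in>UNIV. y k * mpow Q n k j)"
    by (rule member_le_sum) (use nn mpow_nonneg[OF st] in auto)
  also have "\<dots> = y j" using inv_pow[OF inv] .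
  finally show ?thesis using n pos by (smt (verit) mult_pos_pos)
qed

lemma abs_inv:
  fixes x :: "'y::finite \<Rightarrow> real"
  assumes st: "stochastic Q" and inv: "\<forall>j. (\<Sum>i\<in>UNIV. x i * Q i j) = x j"
  shows "\<forall>j. (\<Sum>i\<in>UNIV. \<bar>x i\<bar> * Q i j) = \<bar>x j\<bar>"
proof -
  have Qnn: "\<And>i j. 0 \<le> Q i j" and rs: "\<And>i. (\<Sum>j\<in>UNIV. Q i j) = 1" using st by (auto simp: stochastic_def)
  have le: "\<bar>x j\<bar> \<le> (\<Sum>i\<in>UNIV. \<bar>x i\<bar> * Q i j)" for j
  proof -
    have "\<bar>x j\<bar> = \<bar>\<Sum>i\<in>UNIV. x i * Q i j\<bar>" using inv by simp
    also have "\<dots> \<le> (\<Sum>i\<in>UNIV. \<bar>x i * Q i j\<bar>)" by (rule sum_abs)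
    also have "\<dots> = (\<Sum>i\<in>UNIV. \<bar>x i\<bar> * Q i j)" using Qnn by (simp add: abs_mult)
    finally show ?thesis .
  qed
  have "(\<Sum>j\<in>UNIV. \<Sum>i\<in>UNIV. \<bar>x i\<bar> * Q i j) = (\<Sum>i\<in>UNIV. \<bar>x i\<bar> * (\<Sum>j\<in>UNIV. Q i j))"
    by (subst sum.swap) (simp add: sum_distrib_left)
  also have "\<dots> = (\<Sum>i\<in>UNIV. \<bar>x i\<bar>)" using rs by simp
  finally have "(\<Sum>j\<in>UNIV. (\<Sum>i\<in>UNIV. \<bar>x i\<bar> * Q i j) - \<bar>x j\<bar>) = 0"
    by (simp add: sum_subtractf)
  then have "\<forall>j\<in>UNIV. (\<Sum>i\<in>UNIV. \<bar>x i\<bar> * Q i j) - \<bar>x j\<bar> = 0"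
    by (subst (asm) sum_nonneg_eq_0_iff) (use le in auto)
  then show ?thesis by auto
qed

lemma inv_nonpos:
  fixes x :: "'y::finite \<Rightarrow> real"
  assumes st: "stochastic Q" and irr: "irreducible_chain Q"
    and inv: "\<forall>j. (\<Sum>i\<in>UNIV. x i * Q i j) = x j" and s0: "(\<Sum>i\<in>UNIV. x i) = 0"
  shows "x i \<le> 0"
proof (rule ccontr)
  assume "\<not> x i \<le> 0"
  define y where "y k = \<bar>x k\<bar> + x k" for k
  have yinv: "\<forall>j. (\<Sum>k\<in>UNIV. y k * Q k j) = y j"
    using abs_inv[OF st inv] inv by (simp add: y_def distrib_right sum.distrib)
  have ynn: "\<forall>k. 0 \<le> y k" unfolding y_def by (smt (verit))
  have "0 < y i" using \<open>\<not> x i \<le> 0\<close> by (simp add: y_def)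
  then have "0 < y j" for j using pos_spread[OF st irr yinv ynn] by blast
  then have "0 < x j" for j by (smt (verit) y_def)
  then have "0 < (\<Sum>j\<in>UNIV. x j)" by (simp add: sum_pos)
  then show False using s0 by simp
qed

lemma inv_zero:
  fixes x :: "'y::finite \<Rightarrow> real"
  assumes st: "stochastic Q" and irr: "irreducible_chain Q"
    and inv: "\<forall>j. (\<Sum>i\<in>UNIV. x i * Q i j) = x j" and s0: "(\<Sum>i\<in>UNIV. x i) = 0"
  shows "x i = 0"
proof -
  have "x i \<le> 0" using inv_nonpos[OF st irr inv s0] .
  moreover have "- x i \<le> 0"
    by (rule inv_nonpos[OF st irr, of "\<lambda>k. - x k"]) (use inv s0 in \<open>auto simp: sum_negf\<close>)
  ultimately show ?thesis by simp
qed



lemma stat_exists: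
  fixes Q :: "'y::finite \<Rightarrow> 'y \<Rightarrow> real"
  assumes st: "stochastic Q"
  shows "\<exists>d. stationary_dist d Q"
proof -
  have Qnn: "\<And>i j. 0 \<le> Q i j" and rs: "\<And>i. (\<Sum>j\<in>UNIV. Q i j) = 1" using st by (auto simp: stochastic_def)
  define T where "T = {x::real^'y. (\<forall>i. 0 \<le> x$i) \<and> (\<Sum>i\<in>UNIV. x$i) = 1}"
  define f where "f x = (\<chi> j. \<Sum>i\<in>UNIV. x$i * Q i j)" for x :: "real^'y"
  have "closed T" unfolding T_def
    by (intro closed_Collect_conj closed_Collect_all closed_Collect_le closed_Collect_eq continuous_intros)
  moreover have "bounded T"
  proof -
    have "norm x \<le> 1" if "x \<in> T" for x
    proof -
      have "norm x \<le> (\<Sum>i\<in>UNIV. \<bar>x$i\<bar>)" by (rule norm_le_l1_cart)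
      also have "\<dots> = 1" using that by (simp add: T_def)
      finally show ?thesis .
    qed
    then show ?thesis by (auto simp: bounded_iff)
  qed
  ultimately have cT: "compact T" by (simp add: compact_eq_bounded_closed)
  have cvT: "convex T" unfolding T_def convex_def
    by (auto simp: sum.distrib sum_distrib_left[symmetric])
  have "(\<chi> i. 1 / real CARD('y)) \<in> T" by (simp add: T_def)
  then have neT: "T \<noteq> {}" by blast
  have cf: "continuous_on T f" unfolding f_def by (intro continuous_intros)
  have fT: "f \<in> T \<rightarrow> T"
  proof
    fix x assume x: "x \<in> T"
    have "(\<Sum>j\<in>UNIV. \<Sum>i\<in>UNIV. x$i * Q i j) = (\<Sum>i\<in>UNIV. x$i * (\<Sum>j\<in>UNIV. Q i j))"
      by (subst sum.swap) (simp add: sum_distrib_left)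
    also have "\<dots> = 1" using rs x by (simp add: T_def)
    finally show "f x \<in> T" using x Qnn by (auto simp: T_def f_def intro!: sum_nonneg)
  qed
  obtain x where x: "x \<in> T" "f x = x" using brouwer[OF cT cvT neT cf fT] by blast
  have "stationary_dist (\<lambda>i. x$i) Q"
    unfolding stationary_dist_def
  proof (intro conjI allI)
    fix j show "(\<Sum>i\<in>UNIV. x$i * Q i j) = x$j" using x(2) by (metis f_def vec_lambda_beta)
  qed (use x(1) in \<open>auto simp: T_def\<close>)
  then show ?thesis by blast
qed

lemma stat_dist_ok:
  fixes Q :: "'y::finite \<Rightarrow> 'y \<Rightarrow> real"
  assumes st: "stochastic Q" and irr: "irreducible_chain Q"
  shows "stationary_dist (stat_dist Q) Q"
proof -
  obtain d where d: "stationary_dist d Q" using stat_exists[OF st] by blast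
  have uniq: "e = d" if e: "stationary_dist e Q" for e
  proof
    fix i
    have "(\<lambda>k. e k - d k) i = 0"
      by (rule inv_zero[OF st irr]) (use d e in \<open>auto simp: stationary_dist_def left_diff_distrib sum_subtractf\<close>)
    then show "e i = d i" by simp
  qed
  show ?thesis unfolding stat_dist_def using d uniq by (metis theI)
qed



lemma unif_bound:
  fixes P :: "'a \<Rightarrow> 'y::finite \<Rightarrow> 'y \<Rightarrow> real"
  assumes stoch: "\<forall>w. stochastic (P w)"
    and M: "\<forall>Q \<in> closure (range P). irreducible_chain Q"
  shows "\<exists>c>0. \<forall>w (x::'y \<Rightarrow> real). (\<Sum>i\<in>UNIV. x i) = 0 \<longrightarrow>
            c * (\<Sum>j\<in>UNIV. \<bar>x j\<bar>) \<le> (\<Sum>j\<in>UNIV. \<bar>(\<Sum>i\<in>UNIV. x i * P w i j) - x j\<bar>)"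
proof -
  define phi where "phi Q = (\<chi> i j. Q i j)" for Q :: "'y \<Rightarrow> 'y \<Rightarrow> real"
  define psi where "psi (A :: real^'y^'y) = (\<lambda>i j. A$i$j)" for A
  define K where "K = closure (phi ` range P)"
  define S where "S = {x::real^'y. (\<Sum>i\<in>UNIV. x$i) = 0 \<and> (\<Sum>i\<in>UNIV. \<bar>x$i\<bar>) = 1}"
  define g where "g z = (\<Sum>j\<in>UNIV. \<bar>(\<Sum>i\<in>UNIV. (snd z)$i * (fst z)$i$j) - (snd z)$j\<bar>)"
    for z :: "(real^'y^'y) \<times> (real^'y)"
  have psiphi: "psi (phi Q) = Q" for Q by (simp add: psi_def phi_def)
  have bK: "bounded K"
  proof -
    have "norm (phi (P w)) \<le> real CARD('y)" for w
    proof -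
      have "norm (phi (P w)) \<le> (\<Sum>i\<in>UNIV. norm (phi (P w) $ i))" by (simp add: norm_vec_def L2_set_le_sum)
      also have "\<dots> \<le> (\<Sum>i\<in>UNIV. (\<Sum>j\<in>UNIV. \<bar>phi (P w) $ i $ j\<bar>))"
        by (intro sum_mono) (simp add: norm_le_l1_cart)
      also have "\<dots> = (\<Sum>i\<in>(UNIV::'y set). (1::real))"
        using stoch by (simp add: phi_def stochastic_def)
      finally show ?thesis by simp
    qed
    then have "bounded (phi ` range P)" unfolding bounded_iff by blast
    then show ?thesis unfolding K_def by (rule bounded_closure)
  qed
  have cK: "compact K" using bK by (simp add: compact_eq_bounded_closed K_def)
  have bS: "bounded S"
  proof -
    have "norm x \<le> 1" if "x \<in> S" for x
    proof -
      have "norm x \<le> (\<Sum>i\<in>UNIV. \<bar>x$i\<bar>)" by (rule norm_le_l1_cart)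
      also have "\<dots> = 1" using that by (simp add: S_def)
      finally show ?thesis .
    qed
    then show ?thesis by (auto simp: bounded_iff)
  qed
  have "closed S" unfolding S_def
    by (intro closed_Collect_conj closed_Collect_eq continuous_intros)
  then have cS: "compact S" using bS by (simp add: compact_eq_bounded_closed)
  have cKS: "compact (K \<times> S)" using cK cS by (rule compact_Times)
  have cg: "continuous_on (K \<times> S) g" unfolding g_def by (intro continuous_intros)
  have Kstoch: "K \<subseteq> {A. (\<forall>i j. 0 \<le> A$i$j) \<and> (\<forall>i. (\<Sum>j\<in>UNIV. A$i$j) = 1)}"
    unfolding K_def
  proof (rule closure_minimal)
    show "phi ` range P \<subseteq> {A. (\<forall>i j. 0 \<le> A$i$j) \<and> (\<forall>i. (\<Sum>j\<in>UNIV. A$i$j) = 1)}"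
      using stoch by (auto simp: phi_def stochastic_def)
    show "closed {A::real^'y^'y. (\<forall>i j. 0 \<le> A$i$j) \<and> (\<forall>i. (\<Sum>j\<in>UNIV. A$i$j) = 1)}"
      by (intro closed_Collect_conj closed_Collect_all closed_Collect_le closed_Collect_eq continuous_intros)
  qed
  have Kirr: "psi ` K \<subseteq> closure (range P)"
    unfolding K_def
  proof (rule image_closure_subset)
    show "continuous_on (closure (phi ` range P)) psi"
      unfolding psi_def by (intro continuous_on_coordinatewise_then_product continuous_intros)
    show "psi ` phi ` range P \<subseteq> closure (range P)"
      using closure_subset[of "range P"] by (auto simp: psiphi)
  qed simp
  have gpos: "0 < g z" if z: "z \<in> K \<times> S" for z
  proof (rule ccontr)
    assume "\<not> 0 < g z"
    then have g0: "g z = 0" by (smt (verit) g_def sum_nonneg abs_ge_zero)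
    obtain A x where zAx: "z = (A, x)" "A \<in> K" "x \<in> S" using z by auto
    have st: "stochastic (psi A)" using Kstoch zAx by (auto simp: stochastic_def psi_def)
    have irr: "irreducible_chain (psi A)" using Kirr zAx M by auto
    have "\<forall>j\<in>UNIV. \<bar>(\<Sum>i\<in>UNIV. x$i * A$i$j) - x$j\<bar> = 0"
    proof -
      have "(\<Sum>j\<in>UNIV. \<bar>(\<Sum>i\<in>UNIV. x$i * A$i$j) - x$j\<bar>) = 0" using g0 by (simp add: g_def zAx)
      then show ?thesis by (subst (asm) sum_nonneg_eq_0_iff) auto
    qed
    then have inv: "\<forall>j. (\<Sum>i\<in>UNIV. x$i * psi A i j) = x$j" by (simp add: psi_def)
    have "(\<lambda>i. x$i) k = 0" for k
      by (rule inv_zero[OF st irr]) (use inv zAx in \<open>auto simp: S_def\<close>)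
    then have "(\<Sum>i\<in>UNIV. \<bar>x$i\<bar>) = 0" by simp
    then show False using zAx by (simp add: S_def)
  qed
  show ?thesis
  proof (cases "K \<times> S = {}")
    case True
    have "phi (P undefined) \<in> K" unfolding K_def by (rule subsetD[OF closure_subset]) simp
    then have Se: "S = {}" using True by (simp add: Sigma_empty_iff) (metis empty_iff)
    show ?thesis
    proof (intro exI[of _ 1] conjI allI impI)
      fix w and x :: "'y \<Rightarrow> real" assume s0: "(\<Sum>i\<in>UNIV. x i) = 0"
      have "(\<Sum>j\<in>UNIV. \<bar>x j\<bar>) = 0"
      proof (rule ccontr)
        assume ne: "(\<Sum>j\<in>UNIV. \<bar>x j\<bar>) \<noteq> 0"
        let ?n = "(\<Sum>j\<in>UNIV. \<bar>x j\<bar>)"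
        have "(\<chi> i. x i / ?n) \<in> S" using ne s0
          by (simp add: S_def sum_divide_distrib[symmetric])
        then show False using Se by simp
      qed
      then show "1 * (\<Sum>j\<in>UNIV. \<bar>x j\<bar>) \<le> (\<Sum>j\<in>UNIV. \<bar>(\<Sum>i\<in>UNIV. x i * P w i j) - x j\<bar>)"
        by (simp add: sum_nonneg)
    qed simp
  next
    case False
    obtain z where z: "z \<in> K \<times> S" "\<forall>z'\<in>K \<times> S. g z \<le> g z'"
      using continuous_attains_inf[OF cKS False cg] by blast
    show ?thesis
    proof (intro exI[of _ "g z"] conjI allI impI)
      show "0 < g z" using gpos z(1) .
      fix w and x :: "'y \<Rightarrow> real" assume s0: "(\<Sum>i\<in>UNIV. x i) = 0"
      let ?n = "(\<Sum>j\<in>UNIV. \<bar>x j\<bar>)"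
      show "g z * ?n \<le> (\<Sum>j\<in>UNIV. \<bar>(\<Sum>i\<in>UNIV. x i * P w i j) - x j\<bar>)"
      proof (cases "?n = 0")
        case True then show ?thesis by (simp add: sum_nonneg)
      next
        case ne: False
        have npos: "0 < ?n" using ne by (smt (verit) sum_nonneg abs_ge_zero)
        have xS: "(\<chi> i. x i / ?n) \<in> S" using ne s0
          by (simp add: S_def sum_divide_distrib[symmetric])
        have PK: "phi (P w) \<in> K" unfolding K_def by (rule subsetD[OF closure_subset]) simp
        have "g z \<le> g (phi (P w), \<chi> i. x i / ?n)" using z(2) xS PK by (simp add: mem_Times_iff)
        also have "\<dots> = (\<Sum>j\<in>UNIV. \<bar>(\<Sum>i\<in>UNIV. x i * P w i j) - x j\<bar> / ?n)"
          unfolding g_def phi_def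
          by (simp add: sum_divide_distrib[symmetric] diff_divide_distrib[symmetric] npos)
        also have "\<dots> = (\<Sum>j\<in>UNIV. \<bar>(\<Sum>i\<in>UNIV. x i * P w i j) - x j\<bar>) / ?n"
          by (simp add: sum_divide_distrib)
        finally show ?thesis using npos by (simp add: pos_le_divide_eq)
      qed
    qed
  qed
qed



theorem mainTheorem11:
  fixes P :: "'a::euclidean_space \<Rightarrow> 'y::finite \<Rightarrow> 'y \<Rightarrow> real"
    and H :: "'a \<Rightarrow> 'y \<Rightarrow> 'a"
    and C_P L_h :: real
  assumes stoch: "\<forall>w. stochastic (P w)"
    and M: "\<forall>Q \<in> closure (range P). irreducible_chain Q \<and> aperiodic_chain Q"
    and Pcond: "\<forall>w1 w2. mat_norm (\<lambda>i j. P w1 i j - P w2 i j)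
                   \<le> C_P / (1 + norm w1 + norm w2) * norm (w1 - w2)"
    and L1: "\<forall>w1 w2 y. norm (H w1 y - H w2 y) \<le> L_h * norm (w1 - w2)"
    and L2: "\<forall>y. norm (H 0 y) \<le> L_h"
  shows "\<exists>L_h'. \<forall>w1 w2. norm (hbar P H w1 - hbar P H w2) \<le> L_h' * norm (w1 - w2)"
proof -
  have M': "\<forall>Q \<in> closure (range P). irreducible_chain Q" using M by blast
  obtain c where c: "c > 0" and cb: "\<And>w (x::'y \<Rightarrow> real). (\<Sum>i\<in>UNIV. x i) = 0 \<Longrightarrow>
            c * (\<Sum>j\<in>UNIV. \<bar>x j\<bar>) \<le> (\<Sum>j\<in>UNIV. \<bar>(\<Sum>i\<in>UNIV. x i * P w i j) - x j\<bar>)"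
    using unif_bound[OF stoch M'] by blast
  have Lh: "0 \<le> L_h" using L2 norm_ge_zero order_trans by blast
  have sd: "stationary_dist (stat_dist (P w)) (P w)" for w
  proof (rule stat_dist_ok)
    show "stochastic (P w)" using stoch by blast
    have "P w \<in> closure (range P)" by (rule subsetD[OF closure_subset]) simp
    then show "irreducible_chain (P w)" using M' by blast
  qed
  show ?thesis
  proof (intro exI allI)
    fix w1 w2 :: 'a
    define d1 where "d1 = stat_dist (P w1)"
    define d2 where "d2 = stat_dist (P w2)"
    define x where "x i = d1 i - d2 i" for i
    define t where "t = norm (w1 - w2)"
    define N where "N = (\<Sum>j\<in>UNIV. \<bar>x j\<bar>)"
    have d1s: "stationary_dist d1 (P w1)" and d2s: "stationary_dist d2 (P w2)"
      using sd by (auto simp: d1_def d2_def)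
    have d1nn: "0 \<le> d1 i" for i using d1s by (simp add: stationary_dist_def)
    have d1le: "d1 i \<le> 1" for i
    proof -
      have "d1 i \<le> (\<Sum>k\<in>UNIV. d1 k)" by (rule member_le_sum) (auto simp: d1nn)
      then show ?thesis using d1s by (simp add: stationary_dist_def)
    qed
    have s0: "(\<Sum>i\<in>UNIV. x i) = 0" using d1s d2s by (simp add: x_def sum_subtractf stationary_dist_def)
    have key: "(\<Sum>i\<in>UNIV. x i * P w2 i j) - x j = (\<Sum>i\<in>UNIV. d1 i * (P w2 i j - P w1 i j))" for j
      using d1s d2s by (simp add: x_def stationary_dist_def left_diff_distrib right_diff_distrib sum_subtractf)
    have "c * N \<le> (\<Sum>j\<in>UNIV. \<bar>(\<Sum>i\<in>UNIV. x i * P w2 i j) - x j\<bar>)"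
      unfolding N_def by (rule cb[OF s0])
    also have "\<dots> \<le> (\<Sum>j\<in>UNIV. \<Sum>i\<in>UNIV. \<bar>P w1 i j - P w2 i j\<bar>)"
    proof (rule sum_mono)
      fix j
      have "\<bar>(\<Sum>i\<in>UNIV. x i * P w2 i j) - x j\<bar> = \<bar>\<Sum>i\<in>UNIV. d1 i * (P w2 i j - P w1 i j)\<bar>"
        by (simp add: key)
      also have "\<dots> \<le> (\<Sum>i\<in>UNIV. \<bar>d1 i * (P w2 i j - P w1 i j)\<bar>)" by (rule sum_abs)
      also have "\<dots> \<le> (\<Sum>i\<in>UNIV. \<bar>P w1 i j - P w2 i j\<bar>)"
      proof (rule sum_mono)
        fix i
        have "\<bar>d1 i * (P w2 i j - P w1 i j)\<bar> = d1 i * \<bar>P w1 i j - P w2 i j\<bar>"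
          using d1nn by (simp add: abs_mult abs_minus_commute)
        also have "\<dots> \<le> 1 * \<bar>P w1 i j - P w2 i j\<bar>"
          by (rule mult_right_mono) (auto simp: d1le)
        finally show "\<bar>d1 i * (P w2 i j - P w1 i j)\<bar> \<le> \<bar>P w1 i j - P w2 i j\<bar>" by simp
      qed
      finally show "\<bar>(\<Sum>i\<in>UNIV. x i * P w2 i j) - x j\<bar> \<le> (\<Sum>i\<in>UNIV. \<bar>P w1 i j - P w2 i j\<bar>)" .
    qed
    also have "\<dots> = mat_norm (\<lambda>i j. P w1 i j - P w2 i j)"
      unfolding mat_norm_def by (rule sum.swap)
    also have "\<dots> \<le> C_P / (1 + norm w1 + norm w2) * t" using Pcond by (simp add: t_def)
    finally have cN: "c * N \<le> C_P / (1 + norm w1 + norm w2) * t" .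
    have Nnn: "0 \<le> N" by (simp add: N_def sum_nonneg)
    have tnn: "0 \<le> t" by (simp add: t_def)
    have B: "(1 + norm w2) * N \<le> \<bar>C_P\<bar> / c * t"
    proof -
      have "(1 + norm w2) * (c * N) \<le> (1 + norm w2) * (C_P / (1 + norm w1 + norm w2) * t)"
        by (rule mult_left_mono[OF cN]) simp
      also have "\<dots> = ((1 + norm w2) / (1 + norm w1 + norm w2)) * (C_P * t)" by simp
      also have "\<dots> \<le> 1 * \<bar>C_P * t\<bar>"
      proof -
        have q: "0 \<le> (1 + norm w2) / (1 + norm w1 + norm w2)" "(1 + norm w2) / (1 + norm w1 + norm w2) \<le> 1"
        proof -
          have "0 < 1 + norm w1 + norm w2" by (smt (verit) norm_ge_zero)
          then show "0 \<le> (1 + norm w2) / (1 + norm w1 + norm w2)" "(1 + norm w2) / (1 + norm w1 + norm w2) \<le> 1"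
            by (simp_all add: divide_le_eq_1_pos)
        qed
        let ?a = "(1 + norm w2) / (1 + norm w1 + norm w2)"
        have "?a * (C_P * t) \<le> \<bar>?a * (C_P * t)\<bar>" by (rule abs_ge_self)
        also have "\<dots> = ?a * \<bar>C_P * t\<bar>" using q by (simp add: abs_mult)
        also have "\<dots> \<le> 1 * \<bar>C_P * t\<bar>" by (rule mult_right_mono) (use q in auto)
        finally show ?thesis .
      qed
      also have "\<dots> = \<bar>C_P\<bar> * t" using tnn by (simp add: abs_mult)
      finally have "c * ((1 + norm w2) * N) \<le> \<bar>C_P\<bar> * t" by (simp add: algebra_simps)
      then show ?thesis using c by (simp add: field_simps)
    qed
    have Hb: "norm (H w2 y) \<le> L_h * (1 + norm w2)" for y
    proof -
      have "norm (H w2 y) \<le> norm (H w2 y - H 0 y) + norm (H 0 y)" by (metis norm_triangle_ineq diff_add_cancel)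
      also have "\<dots> \<le> L_h * norm w2 + L_h" using L1 L2 by (smt (verit) diff_zero)
      finally show ?thesis by (simp add: algebra_simps)
    qed
    have "hbar P H w1 - hbar P H w2 = (\<Sum>y\<in>UNIV. d1 y *\<^sub>R (H w1 y - H w2 y)) + (\<Sum>y\<in>UNIV. x y *\<^sub>R H w2 y)"
      by (simp add: hbar_def d1_def d2_def x_def sum.distrib[symmetric] sum_subtractf[symmetric]
          scaleR_diff_right scaleR_diff_left)
    then have "norm (hbar P H w1 - hbar P H w2) \<le> norm (\<Sum>y\<in>UNIV. d1 y *\<^sub>R (H w1 y - H w2 y)) + norm (\<Sum>y\<in>UNIV. x y *\<^sub>R H w2 y)"
      by (simp add: norm_triangle_ineq)
    also have "\<dots> \<le> (\<Sum>y\<in>UNIV. d1 y * (L_h * t)) + (\<Sum>y\<in>UNIV. \<bar>x y\<bar> * (L_h * (1 + norm w2)))"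
    proof (rule add_mono)
      show "norm (\<Sum>y\<in>UNIV. d1 y *\<^sub>R (H w1 y - H w2 y)) \<le> (\<Sum>y\<in>UNIV. d1 y * (L_h * t))"
        by (rule order_trans[OF norm_sum sum_mono]) (use d1nn L1 in \<open>auto simp: t_def intro!: mult_left_mono\<close>)
      show "norm (\<Sum>y\<in>UNIV. x y *\<^sub>R H w2 y) \<le> (\<Sum>y\<in>UNIV. \<bar>x y\<bar> * (L_h * (1 + norm w2)))"
        by (rule order_trans[OF norm_sum sum_mono]) (use Hb in \<open>auto intro!: mult_left_mono\<close>)
    qed
    also have "\<dots> = L_h * t + L_h * ((1 + norm w2) * N)"
    proof -
      have "(\<Sum>y\<in>UNIV. d1 y * (L_h * t)) = (\<Sum>y\<in>UNIV. d1 y) * (L_h * t)" by (rule sum_distrib_right[symmetric])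
      moreover have "(\<Sum>y\<in>UNIV. \<bar>x y\<bar> * (L_h * (1 + norm w2))) = N * (L_h * (1 + norm w2))"
        unfolding N_def by (rule sum_distrib_right[symmetric])
      moreover have "(\<Sum>y\<in>UNIV. d1 y) = 1" using d1s by (simp add: stationary_dist_def)
      ultimately show ?thesis by (simp add: algebra_simps)
    qed
    also have "\<dots> \<le> L_h * t + L_h * (\<bar>C_P\<bar> / c * t)"
      using mult_left_mono[OF B Lh] by simp
    also have "\<dots> = (L_h + L_h * \<bar>C_P\<bar> / c) * norm (w1 - w2)" by (simp add: t_def algebra_simps)
    finally show "norm (hbar P H w1 - hbar P H w2) \<le> (L_h + L_h * \<bar>C_P\<bar> / c) * norm (w1 - w2)" .
  qed
qed

end
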